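(* For real $\nu$ let $K_\nu$ denote the modified Bessel function of the second kind. The following assertions are true: (a) $u\mapsto K_{\nu}'(u)/K_{\nu}^2(u)$ is strictly decreasing on $(0,\infty)$ for all $|\nu|\geq 1$; (b) $u\mapsto K_{\nu}'(u)/K_{\nu}(u)$ is strictly increasing on $(0,\infty)$ for all $\nu\in\mathbb{R}$; (c) $u\mapsto uK_{\nu}'(u)/K_{\nu}(u)$ is strictly decreasing on $(0,\infty)$ for all $\nu\in\mathbb{R}$; (d) $u\mapsto uK_{\nu}'(u)$ is strictly increasing on $(0,\infty)$ for all $\nu\in\mathbb{R}$; (e) $u\mapsto u^2K_{\nu}'(u)$ is strictly increasing on $(0,\infty)$ for all $|\nu|\geq 5/4$; (f) $u\mapsto u^2K_{\nu}'(u)$ is strictly increasing on $(2,\infty)$ for all $\nu\in\mathbb{R}$. In particular, for all $u_1,u_2>0$ and $|\nu|\geq 1$ the following chain of inequalities holds: $$\frac{2K_{\nu}(u_1)K_{\nu}(u_2)}{K_{\nu}(u_1)+K_{\nu}(u_2)}\leq K_{\nu}\left(\frac{u_1+u_2}{2}\right)\leq \sqrt{K_{\nu}(u_1)K_{\nu}(u_2)} \leq K_{\nu}\left(\sqrt{u_1u_2}\right)\leq \frac{K_{\nu}(u_1)+K_{\nu}(u_2)}{2}.$$ Moreover, the second, third and fourth inequalities hold true for all $\nu\in\mathbb{R}$. In addition, for $|\nu|\geq 5/4$ and $u_1,u_2>0$, $$K_{\nu}\left(\frac{2u_1u_2}{u_1+u_2}\right)\leq\frac{K_{\nu}(u_1)+K_{\nu}(u_2)}{2},$$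 and this last inequality holds true for all $u_1,u_2>2$ and all $\nu\in\mathbb{R}$. In each of these inequalities equality holds if and only if $u_1=u_2$.
   Context: $K_\nu$ is the modified Bessel function of the second kind (MacDonald function), which for $u>0$, $\nu\in\mathbb{R}$ has the representation $K_{\nu}(u)=\int_0^{\infty}e^{-u\cosh t}\cosh(\nu t)\,dt>0$; equivalently $K_\nu(u)=\frac{\pi}{2}\frac{I_{-\nu}(u)-I_\nu(u)}{\sin \nu\pi}$ (limiting value for integer $\nu$), where $I_\nu$ is the modified Bessel function of the first kind. *)

theory Defs
  imports "HOL-Analysis.Analysis"
begin

definition besselK :: "real \<Rightarrow> real \<Rightarrow> real" where
  "besselK \<nu> u = integral {0..} (\<lambda>t. exp (- u * cosh t) * cosh (\<nu> * t))"

end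

theory Submission
  imports Defs "HOL-Analysis.Analysis"
begin


lemma pow_fact_le_exp: fixes x::real assumes "x \<ge> 0" shows "x ^ n / fact n \<le> exp x"
proof -
  have "(\<lambda>n. x^n /\<^sub>R fact n) sums exp x" by (rule exp_converges)
  hence s: "(\<lambda>n. x^n / fact n) sums exp x" by (simp add: divide_inverse mult.commute)
  have "(\<Sum>i\<in>{n}. x^i / fact i) \<le> exp x"
    using sum_le_suminf[OF sums_summable[OF s], of "{n}"] s sums_unique assms by fastforce
  thus ?thesis by simp
qed

lemma cosh_le_exp: fixes t::real assumes "t \<ge> 0" shows "cosh t \<le> exp t"
proof -
  have "exp (-t) \<le> exp t" using assms by simp
  thus ?thesis by (simp add: cosh_field_def)
qed

lemma exp_le_cosh: fixes t::real shows "exp t / 2 \<le> cosh t"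
  by (simp add: cosh_field_def)

lemma cosh_ge1: "cosh (t::real) \<ge> 1" by (rule cosh_real_ge_1)

lemma decay:
  fixes u a :: real and d :: nat
  assumes u: "u > 0"
  shows "\<exists>C. \<forall>t\<ge>0. cosh t ^ d * exp (-u * cosh t) * exp (a * t) \<le> C * exp (-t)"
proof -
  define N where "N = nat \<lceil>real d + \<bar>a\<bar> + 1\<rceil>"
  have N: "real d + \<bar>a\<bar> + 1 \<le> real N" unfolding N_def by linarith
  define C where "C = fact N * (2/u)^N"
  have "cosh t ^ d * exp (-u * cosh t) * exp (a * t) \<le> C * exp (-t)" if t: "t \<ge> 0" for t
  proof -
    define y where "y = exp t"
    have y1: "y \<ge> 1" using t by (simp add: y_def)
    have "cosh t ^ d \<le> exp t ^ d"
      by (rule power_mono[OF cosh_le_exp[OF t]]) (smt (verit) cosh_ge1)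
    also have "exp t ^ d = exp (real d * t)" by (simp add: exp_of_nat_mult)
    finally have c1: "cosh t ^ d \<le> exp (real d * t)" .
    have c2: "exp (-u * cosh t) \<le> exp (- u * y / 2)"
      using exp_le_cosh[of t] u by (simp add: y_def mult_left_mono)
    have c3: "exp (a * t) \<le> exp (\<bar>a\<bar> * t)" using t
      by (simp add: mult_right_mono)
    have "cosh t ^ d * exp (-u * cosh t) * exp (a * t) \<le> exp (real d * t) * exp (- u * y / 2) * exp (\<bar>a\<bar> * t)"
      by (intro mult_mono c1 c2 c3) auto
    also have "\<dots> = exp (-t) * (exp ((real d + \<bar>a\<bar> + 1) * t) * exp (- u * y / 2))"
      by (simp add: exp_add[symmetric] algebra_simps)
    also have "\<dots> \<le> exp (-t) * (y ^ N * exp (- u * y / 2))"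
    proof -
      have "exp ((real d + \<bar>a\<bar> + 1) * t) \<le> exp (real N * t)"
        using N t by (simp add: mult_right_mono)
      also have "\<dots> = y ^ N" by (simp add: y_def exp_of_nat_mult)
      finally show ?thesis by (simp add: mult_right_mono)
    qed
    also have "y ^ N * exp (- u * y / 2) \<le> C"
    proof -
      have pos: "(u*y/2) ^ N > 0" using u y1 by simp
      have e: "(u*y/2) ^ N / fact N \<le> exp (u*y/2)" by (rule pow_fact_le_exp) (use u y1 in simp)
      have "y ^ N * exp (- u * y / 2) = y ^ N / exp (u*y/2)" by (simp add: exp_minus field_simps)
      also have "\<dots> \<le> y ^ N / ((u*y/2) ^ N / fact N)"
        by (rule divide_left_mono[OF e]) (use pos y1 in auto)
      also have "\<dots> = C" unfolding C_def using u y1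
        by (simp add: power_mult_distrib power_divide field_simps)
      finally show ?thesis .
    qed
    hence "exp (-t) * (y ^ N * exp (- u * y / 2)) \<le> exp (-t) * C" by simp
    finally show ?thesis by (simp add: mult.commute)
  qed
  thus ?thesis by blast
qed

lemma exp_taylor1: fixes z::real shows "\<bar>exp z - 1 - z\<bar> \<le> exp \<bar>z\<bar> * z^2"
proof -
  have a: "exp z - (1 + z) \<le> exp \<bar>z\<bar> * (z * z)" using Taylor_exp_field[of z 1] by (simp add: numeral_2_eq_2)
  have b: "1 + z \<le> exp z" by (rule exp_ge_add_one_self)
  show ?thesis unfolding power2_eq_square by (subst abs_le_iff) (use a b in linarith)
qed

lemma integrable_exp_bound:
  fixes f :: "real \<Rightarrow> real"
  assumes c: "continuous_on {0..} f" and b: "\<And>t. t \<ge> 0 \<Longrightarrow> \<bar>f t\<bar> \<le> C * exp (-t)"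
  shows "f integrable_on {0..}" "f absolutely_integrable_on {0..}"
proof -
  have g: "(\<lambda>t. C * exp (-1*t)) integrable_on {0..}"
    using integrable_on_cmult_left[OF integrable_on_exp_minus_to_infinity[of 1 0], of C] by simp
  have m: "f \<in> borel_measurable (lebesgue_on {0..})"
    by (rule continuous_imp_measurable_on_sets_lebesgue[OF c]) auto
  show fi: "f integrable_on {0..}"
    by (rule measurable_bounded_by_integrable_imp_integrable_real[OF m g]) (use b in auto)
  show "f absolutely_integrable_on {0..}"
    by (rule absolutely_integrable_integrable_bound[OF _ fi g]) (use b in auto)
qed

definition ker :: "nat \<Rightarrow> real \<Rightarrow> real \<Rightarrow> real \<Rightarrow> real" where
  "ker d \<nu> u t = cosh t ^ d * exp (- u * cosh t) * cosh (\<nu> * t)"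

definition F :: "nat \<Rightarrow> real \<Rightarrow> real \<Rightarrow> real" where
  "F d \<nu> u = integral {0..} (ker d \<nu> u)"

lemma besselK_F: "besselK \<nu> u = F 0 \<nu> u"
  unfolding besselK_def F_def ker_def by simp

lemma ker_nonneg: "ker d \<nu> u t \<ge> 0"
  by (simp add: ker_def)

lemma cosh_le_exp_abs: fixes x::real shows "cosh x \<le> exp \<bar>x\<bar>"
  using cosh_le_exp[of "\<bar>x\<bar>"] by (metis abs_ge_zero cosh_real_abs)

lemma ker_decay:
  assumes u: "u > 0"
  shows "\<exists>C. \<forall>t\<ge>0. ker d \<nu> u t \<le> C * exp (-t)"
proof -
  obtain C where C: "\<forall>t\<ge>0. cosh t ^ d * exp (-u * cosh t) * exp (\<bar>\<nu>\<bar> * t) \<le> C * exp (-t)"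
    using decay[OF u, of d "\<bar>\<nu>\<bar>"] by blast
  have "ker d \<nu> u t \<le> C * exp (-t)" if t: "t \<ge> 0" for t
  proof -
    have "cosh (\<nu> * t) \<le> exp (\<bar>\<nu>\<bar> * t)"
      using cosh_le_exp_abs[of "\<nu>*t"] t by (simp add: abs_mult)
    hence "ker d \<nu> u t \<le> cosh t ^ d * exp (-u * cosh t) * exp (\<bar>\<nu>\<bar> * t)"
      unfolding ker_def by (intro mult_left_mono) auto
    thus ?thesis using C t by auto
  qed
  thus ?thesis by blast
qed

lemma ker_cont: "continuous_on S (ker d \<nu> u)"
  unfolding ker_def by (intro continuous_intros)

lemma ker_int:
  assumes "u > 0"
  shows "ker d \<nu> u integrable_on {0..}"
proof -
  obtain C where "\<forall>t\<ge>0. ker d \<nu> u t \<le> C * exp (-t)" using ker_decay[OF assms] by blast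
  thus ?thesis by (intro integrable_exp_bound(1)[OF ker_cont]) (auto simp: ker_nonneg)
qed

lemma ker_rem:
  assumes u: "u > 0" and h: "\<bar>h\<bar> \<le> u/2"
  shows "\<bar>ker d \<nu> (u+h) t - ker d \<nu> u t + h * ker (Suc d) \<nu> u t\<bar> \<le> h^2 * ker (Suc (Suc d)) \<nu> (u/2) t"
proof -
  define c where "c = cosh t"
  define A where "A = c^d * cosh (\<nu>*t) * exp (-u*c)"
  have c1: "c \<ge> 1" unfolding c_def by (rule cosh_real_ge_1)
  have A0: "A \<ge> 0" unfolding A_def using c1 by simp
  have e: "ker d \<nu> (u+h) t - ker d \<nu> u t + h * ker (Suc d) \<nu> u t = A * (exp (-h*c) - 1 - (-h*c))"
    unfolding ker_def A_def c_def[symmetric] by (simp add: algebra_simps exp_add[symmetric] exp_diff)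
  have "\<bar>A * (exp (-h*c) - 1 - (-h*c))\<bar> = A * \<bar>exp (-h*c) - 1 - (-h*c)\<bar>"
    using A0 by (simp add: abs_mult)
  also have "\<dots> \<le> A * (exp \<bar>-h*c\<bar> * (-h*c)^2)"
    by (rule mult_left_mono[OF exp_taylor1 A0])
  also have "\<dots> = h^2 * (c^(Suc (Suc d)) * cosh (\<nu>*t) * exp (-u*c + \<bar>h\<bar>*c))"
  proof -
    have ee: "exp (-u*c + \<bar>h\<bar>*c) = exp (-u*c) * exp (\<bar>h\<bar>*c)" by (rule exp_add)
    show ?thesis unfolding ee A_def using c1 by (simp add: abs_mult power2_eq_square algebra_simps)
  qed
  also have "\<dots> \<le> h^2 * (c^(Suc (Suc d)) * cosh (\<nu>*t) * exp (-(u/2)*c))"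
  proof -
    have "\<bar>h\<bar>*c \<le> (u/2)*c" using mult_right_mono[OF h, of c] c1 by simp
    hence "-u*c + \<bar>h\<bar>*c \<le> -(u/2)*c" by (simp add: algebra_simps)
    thus ?thesis using c1 by (intro mult_left_mono) auto
  qed
  also have "\<dots> = h^2 * ker (Suc (Suc d)) \<nu> (u/2) t"
    unfolding ker_def c_def by (simp add: algebra_simps)
  finally show ?thesis using e by simp
qed

lemma F_deriv:
  assumes u: "u > 0"
  shows "(F d \<nu> has_real_derivative - F (Suc d) \<nu> u) (at u)"
proof -
  define M where "M = F (Suc (Suc d)) \<nu> (u/2)"
  have bound: "\<bar>F d \<nu> (u+h) - F d \<nu> u + h * F (Suc d) \<nu> u\<bar> \<le> h^2 * M" if h: "\<bar>h\<bar> \<le> u/2" for h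
  proof -
    have uh: "u + h > 0" using h u by linarith
    have i1: "ker d \<nu> (u+h) integrable_on {0..}" by (rule ker_int[OF uh])
    have i2: "ker d \<nu> u integrable_on {0..}" by (rule ker_int[OF u])
    have i3: "ker (Suc d) \<nu> u integrable_on {0..}" by (rule ker_int[OF u])
    have i4: "ker (Suc (Suc d)) \<nu> (u/2) integrable_on {0..}" by (rule ker_int) (use u in simp)
    have i5: "(\<lambda>t. h * ker (Suc d) \<nu> u t) integrable_on {0..}" using integrable_on_cmult_left[OF i3, of h] by simp
    have i6: "(\<lambda>t. h^2 * ker (Suc (Suc d)) \<nu> (u/2) t) integrable_on {0..}" using integrable_on_cmult_left[OF i4, of "h^2"] by simp
    have i7: "(\<lambda>t. ker d \<nu> (u+h) t - ker d \<nu> u t) integrable_on {0..}" by (rule integrable_diff[OF i1 i2])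
    have "F d \<nu> (u+h) - F d \<nu> u + h * F (Suc d) \<nu> u
        = integral {0..} (\<lambda>t. ker d \<nu> (u+h) t - ker d \<nu> u t + h * ker (Suc d) \<nu> u t)"
    proof -
      have "integral {0..} (\<lambda>t. (ker d \<nu> (u+h) t - ker d \<nu> u t) + h * ker (Suc d) \<nu> u t)
          = integral {0..} (\<lambda>t. ker d \<nu> (u+h) t - ker d \<nu> u t) + integral {0..} (\<lambda>t. h * ker (Suc d) \<nu> u t)"
        by (rule integral_add[OF i7 i5])
      also have "integral {0..} (\<lambda>t. ker d \<nu> (u+h) t - ker d \<nu> u t) = F d \<nu> (u+h) - F d \<nu> u"
        unfolding F_def by (rule integral_diff[OF i1 i2])
      also have "integral {0..} (\<lambda>t. h * ker (Suc d) \<nu> u t) = h * F (Suc d) \<nu> u"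
        unfolding F_def by simp
      finally show ?thesis by simp
    qed
    also have "\<bar>\<dots>\<bar> \<le> integral {0..} (\<lambda>t. h^2 * ker (Suc (Suc d)) \<nu> (u/2) t)"
      using integral_norm_bound_integral[of "\<lambda>t. ker d \<nu> (u+h) t - ker d \<nu> u t + h * ker (Suc d) \<nu> u t" "{0..}"
          "\<lambda>t. h^2 * ker (Suc (Suc d)) \<nu> (u/2) t"] ker_rem[OF u h]
      using integrable_add[OF i7 i5] i6 by simp
    also have "\<dots> = h^2 * M" unfolding M_def F_def by simp
    finally show ?thesis .
  qed
  show ?thesis unfolding DERIV_def
  proof -
    have "((\<lambda>h. (F d \<nu> (u + h) - F d \<nu> u) / h - (- F (Suc d) \<nu> u)) \<longlongrightarrow> 0) (at 0)"
    proof (rule Lim_null_comparison)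
      show "\<forall>\<^sub>F h in at 0. norm ((F d \<nu> (u + h) - F d \<nu> u) / h - - F (Suc d) \<nu> u) \<le> \<bar>h\<bar> * M"
      proof -
        have "\<forall>\<^sub>F h in at (0::real). h \<noteq> 0 \<and> \<bar>h\<bar> < u/2"
          using eventually_at[of _ 0 UNIV] u
          by (auto simp: eventually_at dist_real_def intro!: exI[of _ "u/2"])
        thus ?thesis
        proof (rule eventually_mono)
          fix h :: real assume "h \<noteq> 0 \<and> \<bar>h\<bar> < u/2"
          hence h0: "h \<noteq> 0" and hb: "\<bar>h\<bar> \<le> u/2" by auto
          have "(F d \<nu> (u + h) - F d \<nu> u) / h - - F (Suc d) \<nu> u = (F d \<nu> (u+h) - F d \<nu> u + h * F (Suc d) \<nu> u) / h"
            using h0 by (simp add: field_simps)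
          hence "norm ((F d \<nu> (u + h) - F d \<nu> u) / h - - F (Suc d) \<nu> u) = \<bar>F d \<nu> (u+h) - F d \<nu> u + h * F (Suc d) \<nu> u\<bar> / \<bar>h\<bar>" by (simp add: abs_divide)
          also have "\<dots> \<le> h^2 * M / \<bar>h\<bar>" by (rule divide_right_mono[OF bound[OF hb]]) simp
          also have "\<dots> = \<bar>h\<bar> * M" proof -
            show ?thesis using h0 by (cases "h > 0") (auto simp: power2_eq_square field_simps)
          qed
          finally show "norm ((F d \<nu> (u + h) - F d \<nu> u) / h - - F (Suc d) \<nu> u) \<le> \<bar>h\<bar> * M" .
        qed
      qed
      show "((\<lambda>h. \<bar>h\<bar> * M) \<longlongrightarrow> 0) (at 0)"
        using tendsto_mult_right[OF tendsto_rabs[OF tendsto_ident_at[of 0 UNIV]], of M] by simp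
    qed
    thus "((\<lambda>h. (F d \<nu> (u + h) - F d \<nu> u) / h) \<longlongrightarrow> - F (Suc d) \<nu> u) (at 0)"
      by (simp add: tendsto_iff dist_real_def)
  qed
qed

lemma integral_lower:
  fixes f :: "real \<Rightarrow> real"
  assumes fi: "f integrable_on {0..}" and c: "continuous_on {0..} f"
    and nn: "\<And>t. t \<ge> 0 \<Longrightarrow> f t \<ge> 0"
    and ab: "0 \<le> a" "a \<le> b" and m: "\<And>t. a \<le> t \<Longrightarrow> t \<le> b \<Longrightarrow> m \<le> f t"
  shows "m * (b - a) \<le> integral {0..} f"
proof -
  have fab: "f integrable_on {a..b}"
    by (rule integrable_continuous_interval) (rule continuous_on_subset[OF c], use ab in auto)
  have "m * (b - a) = integral {a..b} (\<lambda>_. m)" using ab by simp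
  also have "\<dots> \<le> integral {a..b} f"
    by (rule integral_le) (use fab m in auto)
  also have "\<dots> \<le> integral {0..} f"
    by (rule integral_subset_le) (use ab fab fi nn in auto)
  finally show ?thesis .
qed

lemma F_pos:
  assumes u: "u > 0"
  shows "F d \<nu> u > 0"
proof -
  have l: "exp (- u * cosh 1) * (1 - 0) \<le> F d \<nu> u"
    unfolding F_def
  proof (rule integral_lower[OF ker_int[OF u] ker_cont])
    fix t :: real assume t: "0 \<le> t" "t \<le> 1"
    have "cosh t \<le> cosh 1" using t by (simp add: cosh_real_nonneg_le_iff)
    hence e: "exp (- u * cosh 1) \<le> exp (- u * cosh t)" using u by simp
    have "1 \<le> cosh t ^ d" using cosh_real_ge_1[of t] by (simp add: one_le_power)
    moreover have "1 \<le> cosh (\<nu> * t)" by (rule cosh_real_ge_1)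
    ultimately have "1 \<le> cosh t ^ d * cosh (\<nu> * t)" by (metis mult_mono' mult_1 zero_le_one)
    hence p: "exp (- u * cosh t) * 1 \<le> exp (- u * cosh t) * (cosh t ^ d * cosh (\<nu> * t))"
      by (intro mult_left_mono) auto
    have "exp (- u * cosh 1) \<le> exp (- u * cosh t) * (cosh t ^ d * cosh (\<nu> * t))" using e p by linarith
    thus "exp (- u * cosh 1) \<le> ker d \<nu> u t" unfolding ker_def by (simp add: mult_ac)
  qed (auto simp: ker_nonneg)
  have l': "exp (- u * cosh 1) \<le> F d \<nu> u" using l by simp
  have "exp (- u * cosh 1) > 0" by (rule exp_gt_zero)
  thus ?thesis using l' by linarith
qed

lemma ker_Suc: "ker (Suc d) \<nu> u t = cosh t * ker d \<nu> u t"
  by (simp add: ker_def)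

lemma F_CS:
  assumes u: "u > 0"
  shows "F 1 \<nu> u ^ 2 < F 0 \<nu> u * F 2 \<nu> u"
proof -
  define l where "l = F 1 \<nu> u / F 0 \<nu> u"
  have F0: "F 0 \<nu> u > 0" by (rule F_pos[OF u])
  define g where "g = (\<lambda>t. (cosh t - l)^2 * ker 0 \<nu> u t)"
  have gk: "g t = ker 2 \<nu> u t - 2 * l * ker 1 \<nu> u t + l^2 * ker 0 \<nu> u t" for t
    unfolding g_def ker_def by (simp add: power2_eq_square algebra_simps)
  have i0: "ker 0 \<nu> u integrable_on {0..}" and i1: "ker 1 \<nu> u integrable_on {0..}"
    and i2: "ker 2 \<nu> u integrable_on {0..}" using ker_int[OF u] by auto
  have ia: "(\<lambda>t. 2 * l * ker 1 \<nu> u t) integrable_on {0..}"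
    using integrable_on_cmult_left[OF i1, of "2*l"] by simp
  have ib: "(\<lambda>t. l^2 * ker 0 \<nu> u t) integrable_on {0..}"
    using integrable_on_cmult_left[OF i0, of "l^2"] by simp
  have ic: "(\<lambda>t. ker 2 \<nu> u t - 2 * l * ker 1 \<nu> u t) integrable_on {0..}" by (rule integrable_diff[OF i2 ia])
  have gi: "g integrable_on {0..}" unfolding gk by (rule integrable_add[OF ic ib])
  have "integral {0..} g = integral {0..} (\<lambda>t. ker 2 \<nu> u t - 2 * l * ker 1 \<nu> u t) + integral {0..} (\<lambda>t. l^2 * ker 0 \<nu> u t)"
    unfolding gk by (rule integral_add[OF ic ib])
  also have "\<dots> = F 2 \<nu> u - 2 * l * F 1 \<nu> u + l^2 * F 0 \<nu> u"
  proof -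
    have "integral {0..} (\<lambda>t. ker 2 \<nu> u t - 2 * l * ker 1 \<nu> u t) = integral {0..} (ker 2 \<nu> u) - integral {0..} (\<lambda>t. 2 * l * ker 1 \<nu> u t)"
      by (rule integral_diff[OF i2 ia])
    moreover have "integral {0..} (\<lambda>t. 2 * l * ker 1 \<nu> u t) = 2 * l * F 1 \<nu> u" unfolding F_def by simp
    moreover have "integral {0..} (\<lambda>t. l^2 * ker 0 \<nu> u t) = l^2 * F 0 \<nu> u" unfolding F_def by simp
    ultimately show ?thesis by (simp add: F_def)
  qed
  also have "\<dots> = F 2 \<nu> u - F 1 \<nu> u ^ 2 / F 0 \<nu> u"
    unfolding l_def using F0 by (simp add: power2_eq_square field_simps)
  finally have ig: "integral {0..} g = F 2 \<nu> u - F 1 \<nu> u ^ 2 / F 0 \<nu> u" .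
  have gc: "continuous_on {0..} g" unfolding g_def by (intro continuous_intros ker_cont)
  have gnn: "g t \<ge> 0" for t unfolding g_def by (simp add: ker_nonneg)
  define \<delta> where "\<delta> = (cosh 2 - cosh (1::real)) / 2"
  have c12: "cosh (1::real) < cosh 2" by (simp add: cosh_real_nonneg_less_iff)
  hence \<delta>: "\<delta> > 0" unfolding \<delta>_def by simp
  define m where "m = \<delta>^2 * exp (- u * cosh 3)"
  have m0: "m > 0" unfolding m_def using \<delta> by simp
  have kl: "exp (- u * cosh 3) \<le> ker 0 \<nu> u t" if "0 \<le> t" "t \<le> 3" for t
  proof -
    have "cosh t \<le> cosh 3" using that by (simp add: cosh_real_nonneg_le_iff)
    hence e: "exp (- u * cosh 3) \<le> exp (- u * cosh t)" using u by simp
    have p: "exp (- u * cosh t) * 1 \<le> exp (- u * cosh t) * cosh (\<nu> * t)"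
      by (intro mult_left_mono cosh_real_ge_1) auto
    have "exp (- u * cosh 3) \<le> exp (- u * cosh t) * cosh (\<nu> * t)" using e p by linarith
    thus ?thesis unfolding ker_def by simp
  qed
  have gl: "m \<le> g t" if "0 \<le> t" "t \<le> 3" "\<delta> \<le> \<bar>cosh t - l\<bar>" for t
  proof -
    have "\<delta>^2 \<le> (cosh t - l)^2" using that \<delta> by (metis abs_le_square_iff abs_of_pos)
    thus ?thesis unfolding m_def g_def using kl[OF that(1,2)]
      by (intro mult_mono) auto
  qed
  have "m * 1 \<le> integral {0..} g"
  proof (cases "l \<le> (cosh 1 + cosh 2)/2")
    case True
    have "m * (3 - 2) \<le> integral {0..} g"
    proof (rule integral_lower[OF gi gc])
      fix t :: real assume t: "2 \<le> t" "t \<le> 3"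
      have "cosh 2 \<le> cosh t" using t by (simp add: cosh_real_nonneg_le_iff)
      hence "\<delta> \<le> \<bar>cosh t - l\<bar>" using True unfolding \<delta>_def by (simp add: abs_if)
      thus "m \<le> g t" using gl t by auto
    qed (auto simp: gnn)
    thus ?thesis by simp
  next
    case False
    have "m * (1 - 0) \<le> integral {0..} g"
    proof (rule integral_lower[OF gi gc])
      fix t :: real assume t: "0 \<le> t" "t \<le> 1"
      have "cosh t \<le> cosh 1" using t by (simp add: cosh_real_nonneg_le_iff)
      hence "\<delta> \<le> \<bar>cosh t - l\<bar>" using False unfolding \<delta>_def by (simp add: abs_if)
      thus "m \<le> g t" using gl t by auto
    qed (auto simp: gnn)
    thus ?thesis by simp
  qed
  hence "0 < F 2 \<nu> u - F 1 \<nu> u ^ 2 / F 0 \<nu> u" using m0 ig by simp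
  hence "F 1 \<nu> u ^ 2 / F 0 \<nu> u < F 2 \<nu> u" by simp
  thus ?thesis using F0 by (simp add: divide_less_eq mult.commute)
qed

lemma ker_absint:
  assumes "u > 0"
  shows "ker d \<nu> u absolutely_integrable_on {0..}"
proof -
  obtain C where "\<forall>t\<ge>0. ker d \<nu> u t \<le> C * exp (-t)" using ker_decay[OF assms] by blast
  thus ?thesis by (intro integrable_exp_bound(2)[OF ker_cont]) (auto simp: ker_nonneg)
qed

lemma F_tail:
  assumes u: "u > 0"
  shows "((\<lambda>b. integral {0..b} (ker d \<nu> u)) \<longlongrightarrow> F d \<nu> u) at_top"
proof -
  have ai: "set_integrable lebesgue {0..} (ker d \<nu> u)" using ker_absint[OF u] .
  have L: "((\<lambda>b. set_lebesgue_integral lebesgue {0..b} (ker d \<nu> u)) \<longlongrightarrow> set_lebesgue_integral lebesgue {0..} (ker d \<nu> u)) at_top"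
    by (rule tendsto_set_lebesgue_integral_at_top[OF _ ai]) auto
  have e1: "set_lebesgue_integral lebesgue {0..} (ker d \<nu> u) = F d \<nu> u"
    unfolding F_def by (rule set_lebesgue_integral_eq_integral(2)[OF ai])
  have e2: "set_lebesgue_integral lebesgue {0..b} (ker d \<nu> u) = integral {0..b} (ker d \<nu> u)" for b :: real
  proof -
    have "set_integrable lebesgue {0..b} (ker d \<nu> u)"
      by (rule set_integrable_subset[OF ai]) auto
    thus ?thesis by (rule set_lebesgue_integral_eq_integral(2))
  qed
  show ?thesis using L unfolding e1 e2 .
qed

definition Hb :: "real \<Rightarrow> real \<Rightarrow> real \<Rightarrow> real" where
  "Hb \<nu> u t = - exp (- u * cosh t) * (u * sinh t * cosh (\<nu> * t) + \<nu> * sinh (\<nu> * t))"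

lemma Hb_deriv:
  "(Hb \<nu> u has_real_derivative (u^2 * ker 2 \<nu> u t - u * ker 1 \<nu> u t - (u^2 + \<nu>^2) * ker 0 \<nu> u t)) (at t)"
proof -
  have sq: "cosh t * cosh t = 1 + sinh t * sinh t" using cosh_square_eq[of t] by (simp add: power2_eq_square)
  have sq3: "cosh t * (cosh t * X) = X + sinh t * (sinh t * X)" for X
    by (metis sq distrib_right mult.assoc mult_1)
  show ?thesis unfolding Hb_def
    apply (rule derivative_eq_intros refl)+
    apply (simp add: ker_def power2_eq_square algebra_simps sq3)
    done
qed

lemma Hb_lim:
  assumes u: "u > 0"
  shows "(Hb \<nu> u \<longlongrightarrow> 0) at_top"
proof -
  obtain C1 where C1: "\<forall>t\<ge>0. cosh t ^ 1 * exp (-u * cosh t) * exp (\<bar>\<nu>\<bar> * t) \<le> C1 * exp (-t)"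
    using decay[OF u] by blast
  obtain C0 where C0: "\<forall>t\<ge>0. cosh t ^ 0 * exp (-u * cosh t) * exp (\<bar>\<nu>\<bar> * t) \<le> C0 * exp (-t)"
    using decay[OF u] by blast
  have b: "norm (Hb \<nu> u t) \<le> (u * C1 + \<bar>\<nu>\<bar> * C0) * exp (-t)" if t: "t \<ge> 0" for t
  proof -
    have s1: "\<bar>sinh t\<bar> \<le> cosh t" using t by (simp add: sinh_le_cosh_real)
    have s2: "\<bar>sinh (\<nu>*t)\<bar> \<le> exp (\<bar>\<nu>\<bar> * t)"
    proof -
      have "\<bar>sinh (\<nu>*t)\<bar> = sinh \<bar>\<nu>*t\<bar>" by (simp add: abs_if)
      also have "\<dots> \<le> cosh \<bar>\<nu>*t\<bar>" by (rule sinh_le_cosh_real)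
      also have "\<dots> \<le> exp \<bar>\<nu>*t\<bar>" by (rule cosh_le_exp) simp
      finally show ?thesis using t by (simp add: abs_mult)
    qed
    have c2: "cosh (\<nu>*t) \<le> exp (\<bar>\<nu>\<bar> * t)" using cosh_le_exp_abs[of "\<nu>*t"] t by (simp add: abs_mult)
    define E where "E = exp (- u * cosh t)"
    have E0: "E > 0" unfolding E_def by simp
    have "\<bar>Hb \<nu> u t\<bar> = E * \<bar>u * sinh t * cosh (\<nu> * t) + \<nu> * sinh (\<nu> * t)\<bar>"
      unfolding Hb_def E_def[symmetric] using E0 by (simp add: abs_mult)
    also have "\<dots> \<le> E * (u * cosh t * exp (\<bar>\<nu>\<bar> * t) + \<bar>\<nu>\<bar> * exp (\<bar>\<nu>\<bar> * t))"
    proof (rule mult_left_mono)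
      have "\<bar>u * sinh t * cosh (\<nu> * t)\<bar> = u * \<bar>sinh t\<bar> * cosh (\<nu> * t)" using u by (simp add: abs_mult)
      also have "\<dots> \<le> u * cosh t * exp (\<bar>\<nu>\<bar> * t)"
        using s1 c2 u by (intro mult_mono mult_left_mono) auto
      finally have a1: "\<bar>u * sinh t * cosh (\<nu> * t)\<bar> \<le> u * cosh t * exp (\<bar>\<nu>\<bar> * t)" .
      have a2: "\<bar>\<nu> * sinh (\<nu> * t)\<bar> \<le> \<bar>\<nu>\<bar> * exp (\<bar>\<nu>\<bar> * t)"
        using s2 by (simp add: abs_mult mult_left_mono)
      show "\<bar>u * sinh t * cosh (\<nu> * t) + \<nu> * sinh (\<nu> * t)\<bar> \<le> u * cosh t * exp (\<bar>\<nu>\<bar> * t) + \<bar>\<nu>\<bar> * exp (\<bar>\<nu>\<bar> * t)"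
        using a1 a2 by linarith
    qed (use E0 in simp)
    also have "\<dots> = u * (cosh t ^ 1 * E * exp (\<bar>\<nu>\<bar> * t)) + \<bar>\<nu>\<bar> * (cosh t ^ 0 * E * exp (\<bar>\<nu>\<bar> * t))"
      by (simp add: algebra_simps)
    also have "\<dots> \<le> u * (C1 * exp (-t)) + \<bar>\<nu>\<bar> * (C0 * exp (-t))"
      using C1 C0 t u unfolding E_def by (intro add_mono mult_left_mono) auto
    finally show ?thesis by (simp add: algebra_simps)
  qed
  show ?thesis
  proof (rule Lim_null_comparison)
    show "\<forall>\<^sub>F t in at_top. norm (Hb \<nu> u t) \<le> (u * C1 + \<bar>\<nu>\<bar> * C0) * exp (-t)"
      by (rule eventually_mono[OF eventually_ge_at_top[of "0::real"]]) (use b in auto)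
    show "((\<lambda>t. (u * C1 + \<bar>\<nu>\<bar> * C0) * exp (-t)) \<longlongrightarrow> 0) at_top"
      by (rule tendsto_mult_right_zero) (rule filterlim_compose[OF exp_at_bot filterlim_uminus_at_bot_at_top])
  qed
qed

lemma F_ode:
  assumes u: "u > 0"
  shows "u^2 * F 2 \<nu> u = u * F 1 \<nu> u + (u^2 + \<nu>^2) * F 0 \<nu> u"
proof -
  define g where "g = (\<lambda>t. u^2 * ker 2 \<nu> u t - u * ker 1 \<nu> u t - (u^2 + \<nu>^2) * ker 0 \<nu> u t)"
  have H0: "Hb \<nu> u 0 = 0" by (simp add: Hb_def)
  have eq: "integral {0..b} g = u^2 * integral {0..b} (ker 2 \<nu> u) - u * integral {0..b} (ker 1 \<nu> u)
                - (u^2 + \<nu>^2) * integral {0..b} (ker 0 \<nu> u)" for b :: real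
  proof -
    have ci: "ker d \<nu> u integrable_on {0..b}" for d by (rule integrable_continuous_interval[OF ker_cont])
    have a: "(\<lambda>t. u^2 * ker 2 \<nu> u t) integrable_on {0..b}" using integrable_on_cmult_left[OF ci, of "u^2" 2] by simp
    have b: "(\<lambda>t. u * ker 1 \<nu> u t) integrable_on {0..b}" using integrable_on_cmult_left[OF ci, of u 1] by simp
    have c: "(\<lambda>t. (u^2 + \<nu>^2) * ker 0 \<nu> u t) integrable_on {0..b}" using integrable_on_cmult_left[OF ci, of "u^2+\<nu>^2" 0] by simp
    have "integral {0..b} g = integral {0..b} (\<lambda>t. u^2 * ker 2 \<nu> u t - u * ker 1 \<nu> u t) - integral {0..b} (\<lambda>t. (u^2 + \<nu>^2) * ker 0 \<nu> u t)"
      unfolding g_def by (rule integral_diff[OF integrable_diff[OF a b] c])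
    also have "integral {0..b} (\<lambda>t. u^2 * ker 2 \<nu> u t - u * ker 1 \<nu> u t) = integral {0..b} (\<lambda>t. u^2 * ker 2 \<nu> u t) - integral {0..b} (\<lambda>t. u * ker 1 \<nu> u t)"
      by (rule integral_diff[OF a b])
    finally show ?thesis by simp
  qed
  have ftc: "integral {0..b} g = Hb \<nu> u b" if b: "b \<ge> 0" for b
  proof -
    have "(g has_integral (Hb \<nu> u b - Hb \<nu> u 0)) {0..b}"
    proof (rule fundamental_theorem_of_calculus[OF b])
      fix x assume "x \<in> {0..b}"
      show "(Hb \<nu> u has_vector_derivative g x) (at x within {0..b})"
        unfolding g_def has_real_derivative_iff_has_vector_derivative[symmetric]
        by (rule has_field_derivative_at_within[OF Hb_deriv])
    qed
    thus ?thesis using H0 by (simp add: integral_unique)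
  qed
  have L1: "((\<lambda>b. integral {0..b} g) \<longlongrightarrow> u^2 * F 2 \<nu> u - u * F 1 \<nu> u - (u^2 + \<nu>^2) * F 0 \<nu> u) at_top"
    unfolding eq by (intro tendsto_intros F_tail[OF u])
  have L2: "((\<lambda>b. integral {0..b} g) \<longlongrightarrow> 0) at_top"
  proof (rule Lim_transform_eventually[OF Hb_lim[OF u]])
    show "\<forall>\<^sub>F b in at_top. Hb \<nu> u b = integral {0..b} g"
      by (rule eventually_mono[OF eventually_ge_at_top[of "0::real"]]) (use ftc in auto)
  qed
  have "u^2 * F 2 \<nu> u - u * F 1 \<nu> u - (u^2 + \<nu>^2) * F 0 \<nu> u = 0"
    using tendsto_unique[OF _ L1 L2] by simp
  thus ?thesis by simp
qed

lemma barrier: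
  fixes h h' :: "real \<Rightarrow> real"
  assumes der: "\<And>x. x > a \<Longrightarrow> (h has_real_derivative h' x) (at x)"
    and zero: "\<And>x. x > a \<Longrightarrow> h x = 0 \<Longrightarrow> h' x < 0"
    and x0: "a < x0" "h x0 \<le> 0" and x1: "x0 < x1"
  shows "h x1 < 0"
proof -
  have cont: "continuous_on {y..z} h" if "a < y" for y z
  proof (rule continuous_at_imp_continuous_on, intro ballI)
    fix x assume "x \<in> {y..z}"
    hence "a < x" using that by auto
    thus "isCont h x" using DERIV_isCont der by blast
  qed
  obtain x2 where x2: "x0 \<le> x2" "x2 < x1" "h x2 < 0"
  proof (cases "h x0 < 0")
    case True thus ?thesis using that x1 by auto
  next
    case False
    hence h0: "h x0 = 0" using x0 by simp
    obtain d where d: "d > 0" "\<forall>e>0. e < d \<longrightarrow> h x0 > h (x0 + e)"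
      using DERIV_neg_dec_right[OF der[OF x0(1)] zero[OF x0(1) h0]] by blast
    define e where "e = min d (x1 - x0) / 2"
    have e: "e > 0" "e < d" "x0 + e < x1" using d(1) x1 unfolding e_def by (auto simp: min_def field_simps)
    thus ?thesis using that[of "x0 + e"] d h0 by auto
  qed
  show ?thesis
  proof (rule ccontr)
    assume "\<not> h x1 < 0"
    hence hx1: "0 \<le> h x1" by simp
    define T where "T = {x \<in> {x2..x1}. (\<lambda>_. 0) x \<le> h x}"
    have cT: "closed T" unfolding T_def
      by (rule continuous_on_closed_Collect_le) (use cont x0 x2 in auto)
    have x1T: "x1 \<in> T" using hx1 x2 unfolding T_def by auto
    have bT: "bdd_below T" unfolding T_def by (rule bdd_belowI[of _ x2]) auto
    define z where "z = Inf T"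
    have zT: "z \<in> T" unfolding z_def by (rule closed_contains_Inf) (use x1T bT cT in auto)
    hence z: "x2 \<le> z" "z \<le> x1" "0 \<le> h z" unfolding T_def by auto
    have low: "h y < 0" if "x2 \<le> y" "y < z" for y
    proof (rule ccontr)
      assume "\<not> h y < 0"
      hence "y \<in> T" unfolding T_def using that z by auto
      hence "z \<le> y" unfolding z_def by (rule cInf_lower[OF _ bT])
      thus False using that by simp
    qed
    have zx2: "x2 < z" using z x2 by (cases "z = x2") auto
    obtain w where w: "x2 \<le> w" "w \<le> z" "h w = 0"
      using IVT'[of h x2 0 z] x2 z cont[of x2 z] x0 by auto
    have "w = z" using low[of w] w by force
    hence hz: "h z = 0" using w by simp
    have az: "a < z" using x0 x2 zx2 by linarith
    obtain d where d: "d > 0" "\<forall>e>0. e < d \<longrightarrow> h z < h (z - e)"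
      using DERIV_neg_dec_left[OF der[OF az] zero[OF az hz]] by blast
    define e where "e = min d (z - x2) / 2"
    have e: "e > 0" "e < d" "x2 \<le> z - e" "z - e < z" using d(1) zx2 unfolding e_def by (auto simp: min_def field_simps)
    have "h z < h (z - e)" using d e by auto
    moreover have "h (z - e) < 0" using low e by auto
    ultimately show False using hz by simp
  qed
qed


definition qf :: "real \<Rightarrow> real \<Rightarrow> real" where
  "qf \<nu> u = u * F 1 \<nu> u / F 0 \<nu> u"

lemma qf_pos: "u > 0 \<Longrightarrow> qf \<nu> u > 0"
  unfolding qf_def using F_pos[of u 1 \<nu>] F_pos[of u 0 \<nu>] by simp

lemma F2_eq: "u > 0 \<Longrightarrow> F 2 \<nu> u = (u * F 1 \<nu> u + (u^2 + \<nu>^2) * F 0 \<nu> u) / u^2"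
  using F_ode[of u \<nu>] by (simp add: field_simps)

lemma F1_eq: "u > 0 \<Longrightarrow> F 1 \<nu> u = qf \<nu> u * F 0 \<nu> u / u"
  unfolding qf_def using F_pos[of u 0 \<nu>] by simp

lemma qf_deriv:
  assumes u: "u > 0"
  shows "(qf \<nu> has_real_derivative ((qf \<nu> u)^2 - u^2 - \<nu>^2) / u) (at u)"
proof -
  have d0: "(F 0 \<nu> has_real_derivative - F 1 \<nu> u) (at u)" using F_deriv[OF u, of 0 \<nu>] by simp
  have d1: "(F 1 \<nu> has_real_derivative - F 2 \<nu> u) (at u)" using F_deriv[OF u, of 1 \<nu>] by (simp add: numeral_2_eq_2)
  have F0: "F 0 \<nu> u > 0" by (rule F_pos[OF u])
  have "((\<lambda>x. x * F 1 \<nu> x / F 0 \<nu> x) has_real_derivative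
        ((1 * F 1 \<nu> u + (- F 2 \<nu> u) * u) * F 0 \<nu> u - u * F 1 \<nu> u * (- F 1 \<nu> u)) / (F 0 \<nu> u * F 0 \<nu> u)) (at u)"
    by (intro DERIV_divide DERIV_mult DERIV_ident d0 d1) (use F0 in simp)
  moreover have "((1 * F 1 \<nu> u + (- F 2 \<nu> u) * u) * F 0 \<nu> u - u * F 1 \<nu> u * (- F 1 \<nu> u)) / (F 0 \<nu> u * F 0 \<nu> u)
      = ((qf \<nu> u)^2 - u^2 - \<nu>^2) / u"
    unfolding F2_eq[OF u] qf_def using F0 u by (simp add: field_simps power2_eq_square)
  ultimately show ?thesis unfolding qf_def[abs_def] by simp
qed

lemma qf_lower:
  assumes u: "u > 0"
  shows "(qf \<nu> u)^2 > u^2 + \<nu>^2"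
proof (rule ccontr)
  assume "\<not> ?thesis"
  hence hu: "(qf \<nu> u)^2 - u^2 - \<nu>^2 \<le> 0" by simp
  define h where "h = (\<lambda>x. (qf \<nu> x)^2 - x^2 - \<nu>^2)"
  define h' where "h' = (\<lambda>x. 2 * qf \<nu> x * (((qf \<nu> x)^2 - x^2 - \<nu>^2) / x) - 2 * x)"
  have hd: "(h has_real_derivative h' x) (at x)" if "x > 0" for x
    unfolding h_def h'_def
    by (rule derivative_eq_intros qf_deriv[OF that] refl | simp)+
  have neg: "h x < 0" if "x > u" for x
  proof (rule barrier[of 0 h h' u x])
    fix x :: real assume "x > 0" "h x = 0"
    thus "h' x < 0" unfolding h'_def h_def by simp
  qed (use hd u that hu in \<open>auto simp: h_def\<close>)
  define Q where "Q = qf \<nu> u"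
  have Q0: "Q > 0" unfolding Q_def by (rule qf_pos[OF u])
  have qdec: "qf \<nu> x \<le> Q" if "x \<ge> u" for x
    unfolding Q_def
  proof (rule DERIV_nonpos_imp_nonincreasing[OF that])
    fix y assume y: "u \<le> y" "y \<le> x"
    show "\<exists>d. (qf \<nu> has_real_derivative d) (at y) \<and> d \<le> 0"
    proof (intro exI conjI)
      show "(qf \<nu> has_real_derivative ((qf \<nu> y)^2 - y^2 - \<nu>^2) / y) (at y)" using qf_deriv y u by simp
      show "((qf \<nu> y)^2 - y^2 - \<nu>^2) / y \<le> 0"
      proof (cases "y = u")
        case True thus ?thesis using hu u by (simp add: divide_nonpos_pos)
      next
        case False hence "h y < 0" using neg y by simp
        thus ?thesis using y u unfolding h_def by (simp add: divide_nonpos_pos)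
      qed
    qed
  qed
  define U where "U = u + Q + 1"
  define V where "V = U + Q + 1"
  have UV: "U \<le> V" "u \<le> U" "U \<ge> 1" "U \<ge> Q + 1" unfolding U_def V_def using Q0 u by auto
  have "qf \<nu> V + V \<le> qf \<nu> U + U"
  proof (rule DERIV_nonpos_imp_nonincreasing[OF UV(1)])
    fix x assume x: "U \<le> x" "x \<le> V"
    have x0: "x > 0" using x UV by linarith
    have qx: "qf \<nu> x \<le> Q" "qf \<nu> x > 0" using qdec[of x] qf_pos[OF x0] x UV by auto
    have "(qf \<nu> x)^2 \<le> Q^2" using qx by (intro power_mono) auto
    have "x * x - x \<ge> Q * Q"
    proof -
      have "x - 1 \<ge> Q" "x \<ge> Q" using x UV Q0 by auto
      hence "x * (x - 1) \<ge> Q * Q" using Q0 by (intro mult_mono) auto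
      thus ?thesis by (simp add: algebra_simps)
    qed
    hence "(qf \<nu> x)^2 - x^2 - \<nu>^2 \<le> - x"
      using \<open>(qf \<nu> x)^2 \<le> Q^2\<close> by (simp add: power2_eq_square) (smt (verit) zero_le_square)
    hence "((qf \<nu> x)^2 - x^2 - \<nu>^2) / x \<le> -1" using x0 by (simp add: divide_le_eq)
    moreover have "((\<lambda>x. qf \<nu> x + x) has_real_derivative ((qf \<nu> x)^2 - x^2 - \<nu>^2) / x + 1) (at x)"
      by (intro DERIV_add qf_deriv[OF x0] DERIV_ident)
    ultimately show "\<exists>y. ((\<lambda>x. qf \<nu> x + x) has_real_derivative y) (at x) \<and> y \<le> 0" by force
  qed
  moreover have "qf \<nu> U \<le> Q" using qdec UV by auto
  moreover have "qf \<nu> V > 0" using qf_pos[of V] UV u by auto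
  ultimately show False unfolding V_def by linarith
qed

lemma qf_upper_gen:
  assumes a: "a \<ge> 0" and u: "u > a"
    and cond: "\<And>x. x > a \<Longrightarrow> (x^2 + \<nu>^2)^2 > 3 * x^2 + \<nu>^2"
    and big: "\<And>x. x > a \<Longrightarrow> x^2 + \<nu>^2 \<ge> 25/16"
  shows "qf \<nu> u < u^2 + \<nu>^2"
proof (rule ccontr)
  assume "\<not> ?thesis"
  hence ku: "u^2 + \<nu>^2 - qf \<nu> u \<le> 0" by simp
  have u0: "u > 0" using a u by linarith
  define k where "k = (\<lambda>x. x^2 + \<nu>^2 - qf \<nu> x)"
  define k' where "k' = (\<lambda>x. 2 * x - ((qf \<nu> x)^2 - x^2 - \<nu>^2) / x)"
  have kd: "(k has_real_derivative k' x) (at x)" if "x > a" for x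
  proof -
    have "x > 0" using that a by linarith
    hence "((\<lambda>x. x^2 + \<nu>^2 - qf \<nu> x) has_real_derivative (2 * x + 0 - ((qf \<nu> x)^2 - x^2 - \<nu>^2) / x)) (at x)"
      by (intro DERIV_diff DERIV_add DERIV_const qf_deriv) (auto intro!: derivative_eq_intros)
    thus ?thesis unfolding k_def k'_def by simp
  qed
  have kneg: "k x < 0" if "x > u" for x
  proof (rule barrier[of a k k' u x])
    fix x :: real assume x: "x > a" "k x = 0"
    hence qx: "qf \<nu> x = x^2 + \<nu>^2" unfolding k_def by simp
    have x0: "x > 0" using x a by linarith
    have "((qf \<nu> x)^2 - x^2 - \<nu>^2) / x > 2 * x"
      using cond[OF x(1)] x0 unfolding qx by (simp add: field_simps power2_eq_square)
    thus "k' x < 0" unfolding k'_def by simp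
  qed (use kd u that ku in \<open>auto simp: k_def\<close>)
  define c :: real where "c = 9/25"
  have qbig: "qf \<nu> x > x^2 + \<nu>^2" "qf \<nu> x > 25/16" if "x > u" for x
    using kneg[OF that] big[of x] that u unfolding k_def by auto
  define u1 where "u1 = u + 1"
  have u1: "u1 > u" "u1 > 0" unfolding u1_def using u0 by auto
  define Q where "Q = qf \<nu> u1"
  have Q0: "Q > 0" unfolding Q_def using qf_pos u1 by auto
  define V where "V = u1 * exp (1 / (c * Q) + 1)"
  have V: "V > u1"
  proof -
    have "1 / (c * Q) + 1 > 0" using Q0 unfolding c_def by (simp add: add_pos_pos)
    hence "exp (1 / (c * Q) + 1) > 1" by simp
    thus ?thesis unfolding V_def using u1 by simp
  qed
  have "1 / qf \<nu> V + c * ln V \<le> 1 / qf \<nu> u1 + c * ln u1"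
  proof (rule DERIV_nonpos_imp_nonincreasing[where f="\<lambda>x. 1 / qf \<nu> x + c * ln x"])
    show "u1 \<le> V" using V by simp
    fix x assume x: "u1 \<le> x" "x \<le> V"
    have xu: "x > u" using x u1 by linarith
    have x0: "x > 0" using xu u0 by linarith
    define q where "q = qf \<nu> x"
    have q: "q > x^2 + \<nu>^2" "q > 25/16" using qbig[OF xu] unfolding q_def by auto
    have der0: "((\<lambda>x. 1 / qf \<nu> x + c * ln x) has_real_derivative
        ((0 * qf \<nu> x - 1 * (((qf \<nu> x)^2 - x^2 - \<nu>^2) / x)) / (qf \<nu> x * qf \<nu> x) + c * (1 / x))) (at x)"
      using DERIV_add[OF DERIV_divide[OF DERIV_const[of 1] qf_deriv[OF x0, where \<nu>=\<nu>]] DERIV_cmult[OF DERIV_ln_divide[OF x0], of c]]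
        qf_pos[OF x0, where \<nu>=\<nu>] by simp
    have der: "((\<lambda>x. 1 / qf \<nu> x + c * ln x) has_real_derivative
        (- (((q)^2 - x^2 - \<nu>^2) / x) / (q * q) + c * (1 / x))) (at x)"
      using der0 unfolding q_def by simp
    have qp: "q > 0" using q(2) by linarith
    have "c * q^2 \<le> q^2 - q"
    proof -
      have "1 \<le> (16/25) * q" using q(2) by linarith
      hence "q * 1 \<le> q * ((16/25) * q)" using qp by (intro mult_left_mono) auto
      hence "q \<le> 16/25 * (q*q)" by (simp add: algebra_simps)
      thus ?thesis unfolding c_def power2_eq_square by linarith
    qed
    also have "q^2 - q \<le> q^2 - x^2 - \<nu>^2" using q by simp
    finally have "c * q^2 \<le> q^2 - x^2 - \<nu>^2" .
    hence "c * (q*q) / (x * (q*q)) \<le> ((q)^2 - x^2 - \<nu>^2) / (x * (q * q))"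
      using x0 qp by (intro divide_right_mono) (auto simp: power2_eq_square)
    moreover have "c * (q*q) / (x * (q*q)) = c * (1/x)" using qp by simp
    moreover have "((q)^2 - x^2 - \<nu>^2) / (x * (q * q)) = ((q)^2 - x^2 - \<nu>^2) / x / (q * q)" by simp
    ultimately have "c * (1/x) \<le> ((q)^2 - x^2 - \<nu>^2) / x / (q * q)" by linarith
    moreover have "- (((q)^2 - x^2 - \<nu>^2) / x) / (q * q) = - (((q)^2 - x^2 - \<nu>^2) / x / (q * q))"
      by (rule minus_divide_left[symmetric])
    ultimately have "- (((q)^2 - x^2 - \<nu>^2) / x) / (q * q) + c * (1 / x) \<le> 0" by linarith
    thus "\<exists>y. ((\<lambda>x. 1 / qf \<nu> x + c * ln x) has_real_derivative y) (at x) \<and> y \<le> 0"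
      using der by blast
  qed
  moreover have "ln V = ln u1 + (1 / (c * Q) + 1)" unfolding V_def using u1 by (simp add: ln_mult)
  hence "c * ln V = c * ln u1 + c * (1 / (c * Q) + 1)" by (simp add: distrib_left)
  ultimately have "1 / qf \<nu> V \<le> 1 / Q - c * (1 / (c * Q) + 1)" unfolding Q_def by linarith
  also have "\<dots> = - c" using Q0 by (simp add: c_def field_simps)
  finally have a: "1 / qf \<nu> V \<le> - c" .
  have "qf \<nu> V > 0" using qf_pos[of V] V u1 by simp
  hence "1 / qf \<nu> V > 0" by simp
  thus False using a unfolding c_def by linarith
qed

lemma qf_upper:
  assumes "(\<bar>\<nu>\<bar> \<ge> 5/4 \<and> u > 0) \<or> u > 2"
  shows "qf \<nu> u < u^2 + \<nu>^2"
proof (cases "\<bar>\<nu>\<bar> \<ge> 5/4 \<and> u > 0")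
  case True
  have n: "\<nu>^2 \<ge> 25/16"
  proof -
    have "(5/4)^2 \<le> \<bar>\<nu>\<bar>^2" using True by (intro power_mono) auto
    thus ?thesis by (simp add: power2_eq_square)
  qed
  show ?thesis
  proof (rule qf_upper_gen[of 0])
    fix x :: real assume x: "x > 0"
    define w where "w = x^2"
    define n where "n = \<nu>^2"
    have w: "w > 0" unfolding w_def using x by simp
    have nn: "n \<ge> 25/16" unfolding n_def using n .
    have "(w + n)^2 - (3 * w + n) = w^2 + (2*n - 3) * w + n * (n - 1)"
      by (simp add: power2_eq_square algebra_simps)
    moreover have "w^2 > 0" using w by simp
    moreover have "(2*n - 3) * w \<ge> 0" using nn w by (intro mult_nonneg_nonneg) auto
    moreover have "n * (n - 1) > 0" using nn by (intro mult_pos_pos) auto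
    ultimately show "(x^2 + \<nu>^2)^2 > 3 * x^2 + \<nu>^2" unfolding w_def n_def by linarith
    show "x^2 + \<nu>^2 \<ge> 25/16" using n by (simp add: add_increasing)
  qed (use True in auto)
next
  case False
  hence u: "u > 2" using assms by auto
  show ?thesis
  proof (rule qf_upper_gen[of 2])
    fix x :: real assume x: "x > 2"
    define w where "w = x^2"
    define n where "n = \<nu>^2"
    have "2*2 < x*x" using x by (intro mult_strict_mono) auto
    hence w: "w > 4" unfolding w_def by (simp add: power2_eq_square)
    have n0: "n \<ge> 0" unfolding n_def by simp
    have "(w + n)^2 - (3 * w + n) = w * (w - 3) + 2 * n * w + (n - 1/2)^2 - 1/4"
      by (simp add: power2_eq_square algebra_simps)
    moreover have "4 * 1 < w * (w - 3)" using w by (intro mult_strict_mono) auto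
    moreover have "2 * n * w \<ge> 0" using n0 w by simp
    moreover have "(n - 1/2)^2 \<ge> 0" by simp
    ultimately show "(x^2 + \<nu>^2)^2 > 3 * x^2 + \<nu>^2" unfolding w_def n_def by linarith
    have "\<nu>^2 \<ge> 0" by simp
    thus "x^2 + \<nu>^2 \<ge> 25/16" using w unfolding w_def by linarith
  qed (use u in auto)
qed

lemma monotone_on_transfer:
  assumes "monotone_on S R R' f" "\<And>x. x \<in> S \<Longrightarrow> g x = f x"
  shows "monotone_on S R R' g"
  using assms unfolding monotone_on_def by auto

lemma smono_deriv:
  fixes f f' :: "real \<Rightarrow> real"
  assumes "\<And>x. x > a \<Longrightarrow> (f has_real_derivative f' x) (at x)" "\<And>x. x > a \<Longrightarrow> f' x > 0"
  shows "strict_mono_on {a<..} f"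
proof (rule monotone_onI)
  fix r s assume rs: "r \<in> {a<..}" "s \<in> {a<..}" "r < s"
  show "f r < f s"
  proof (rule DERIV_pos_imp_increasing[OF rs(3)])
    fix x assume "r \<le> x" "x \<le> s"
    hence x: "x > a" using rs by auto
    show "\<exists>y. (f has_real_derivative y) (at x) \<and> 0 < y" using assms(1)[OF x] assms(2)[OF x] by blast
  qed
qed

lemma santimono_deriv:
  fixes f f' :: "real \<Rightarrow> real"
  assumes "\<And>x. x > a \<Longrightarrow> (f has_real_derivative f' x) (at x)" "\<And>x. x > a \<Longrightarrow> f' x < 0"
  shows "strict_antimono_on {a<..} f"
proof (rule monotone_onI)
  fix r s assume rs: "r \<in> {a<..}" "s \<in> {a<..}" "r < s"
  show "f s < f r"
  proof (rule DERIV_neg_imp_decreasing[OF rs(3)])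
    fix x assume "r \<le> x" "x \<le> s"
    hence x: "x > a" using rs by auto
    show "\<exists>y. (f has_real_derivative y) (at x) \<and> y < 0" using assms(1)[OF x] assms(2)[OF x] by blast
  qed
qed

lemma deriv_besselK:
  assumes "u > 0"
  shows "deriv (besselK \<nu>) u = - F 1 \<nu> u"
proof -
  have e: "besselK \<nu> = F 0 \<nu>" by (rule ext) (rule besselK_F)
  show ?thesis unfolding e using F_deriv[OF assms, of 0 \<nu>] by (simp add: DERIV_imp_deriv)
qed

lemma besselK_pos: "u > 0 \<Longrightarrow> besselK \<nu> u > 0"
  using F_pos[of u 0 \<nu>] besselK_F by simp

lemma d0: "u > 0 \<Longrightarrow> (F 0 \<nu> has_real_derivative - F 1 \<nu> u) (at u)"
  using F_deriv[of u 0 \<nu>] by simp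
lemma d1: "u > 0 \<Longrightarrow> (F 1 \<nu> has_real_derivative - F 2 \<nu> u) (at u)"
  using F_deriv[of u 1 \<nu>] by (simp add: numeral_2_eq_2)

lemma part_a:
  assumes nu: "\<bar>\<nu>\<bar> \<ge> 1"
  shows "strict_antimono_on {0<..} (\<lambda>u. deriv (besselK \<nu>) u / (besselK \<nu> u)^2)"
proof -
  have "strict_antimono_on {0<..} (\<lambda>u. - F 1 \<nu> u / (F 0 \<nu> u * F 0 \<nu> u))"
  proof (rule santimono_deriv)
    fix u :: real assume u: "u > 0"
    have F0: "F 0 \<nu> u > 0" by (rule F_pos[OF u])
    show "((\<lambda>u. - F 1 \<nu> u / (F 0 \<nu> u * F 0 \<nu> u)) has_real_derivative
      (- (- F 2 \<nu> u) * (F 0 \<nu> u * F 0 \<nu> u) - (- F 1 \<nu> u) * ((- F 1 \<nu> u) * F 0 \<nu> u + (- F 1 \<nu> u) * F 0 \<nu> u))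
         / ((F 0 \<nu> u * F 0 \<nu> u) * (F 0 \<nu> u * F 0 \<nu> u))) (at u)"
      by (rule DERIV_divide[OF DERIV_minus[OF d1[OF u]] DERIV_mult[OF d0[OF u] d0[OF u]]]) (use F0 in simp)
    define q where "q = qf \<nu> u"
    have ql: "q^2 > u^2 + \<nu>^2" unfolding q_def by (rule qf_lower[OF u])
    have q0: "q > 0" unfolding q_def by (rule qf_pos[OF u])
    have "1 * 1 \<le> \<bar>\<nu>\<bar> * \<bar>\<nu>\<bar>" using nu by (intro mult_mono) auto
    hence "1 \<le> \<nu>^2" by (simp add: power2_eq_square)
    moreover have "u^2 > 0" using u by simp
    ultimately have "q^2 > 1" using ql by linarith
    have q1: "q > 1"
    proof (rule ccontr)
      assume "\<not> q > 1"
      hence "q * q \<le> 1 * 1" using q0 by (intro mult_mono) auto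
      thus False using \<open>q^2 > 1\<close> by (simp add: power2_eq_square)
    qed
    have "q < q^2" using q1 by (simp add: power2_eq_square)
    hence key: "q + u^2 + \<nu>^2 < 2 * q^2" using ql by linarith
    have F1: "F 1 \<nu> u = q * F 0 \<nu> u / u" unfolding q_def by (rule F1_eq[OF u])
    have F2: "F 2 \<nu> u = F 0 \<nu> u * (q + u^2 + \<nu>^2) / u^2"
      unfolding F2_eq[OF u] F1 using u by (simp add: field_simps power2_eq_square)
    have "F 2 \<nu> u * F 0 \<nu> u - 2 * F 1 \<nu> u ^ 2 = (F 0 \<nu> u)^2 * ((q + u^2 + \<nu>^2) - 2 * q^2) / u^2"
      unfolding F1 F2 using u by (simp add: field_simps power2_eq_square)
    also have "\<dots> < 0"
      using key F0 u by (intro divide_neg_pos mult_pos_neg) auto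
    finally have neg: "F 2 \<nu> u * F 0 \<nu> u - 2 * F 1 \<nu> u ^ 2 < 0" .
    have "(- (- F 2 \<nu> u) * (F 0 \<nu> u * F 0 \<nu> u) - (- F 1 \<nu> u) * ((- F 1 \<nu> u) * F 0 \<nu> u + (- F 1 \<nu> u) * F 0 \<nu> u))
         = F 0 \<nu> u * (F 2 \<nu> u * F 0 \<nu> u - 2 * F 1 \<nu> u ^ 2)"
      by (simp add: algebra_simps power2_eq_square)
    also have "\<dots> < 0" using neg F0 by (rule mult_pos_neg[rotated])
    finally show "(- (- F 2 \<nu> u) * (F 0 \<nu> u * F 0 \<nu> u) - (- F 1 \<nu> u) * ((- F 1 \<nu> u) * F 0 \<nu> u + (- F 1 \<nu> u) * F 0 \<nu> u))
         / ((F 0 \<nu> u * F 0 \<nu> u) * (F 0 \<nu> u * F 0 \<nu> u)) < 0"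
      using F0 by (intro divide_neg_pos) auto
  qed
  thus ?thesis
    by (rule monotone_on_transfer) (simp add: deriv_besselK besselK_F power2_eq_square)
qed

lemma part_b:
  shows "strict_mono_on {0<..} (\<lambda>u. deriv (besselK \<nu>) u / besselK \<nu> u)"
proof -
  have "strict_mono_on {0<..} (\<lambda>u. - F 1 \<nu> u / F 0 \<nu> u)"
  proof (rule smono_deriv)
    fix u :: real assume u: "u > 0"
    have F0: "F 0 \<nu> u > 0" by (rule F_pos[OF u])
    show "((\<lambda>u. - F 1 \<nu> u / F 0 \<nu> u) has_real_derivative
      (- (- F 2 \<nu> u) * F 0 \<nu> u - (- F 1 \<nu> u) * (- F 1 \<nu> u)) / (F 0 \<nu> u * F 0 \<nu> u)) (at u)"
      by (rule DERIV_divide[OF DERIV_minus[OF d1[OF u]] d0[OF u]]) (use F0 in simp)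
    have "(- (- F 2 \<nu> u) * F 0 \<nu> u - (- F 1 \<nu> u) * (- F 1 \<nu> u)) = F 0 \<nu> u * F 2 \<nu> u - F 1 \<nu> u ^ 2"
      by (simp add: algebra_simps power2_eq_square)
    also have "\<dots> > 0" using F_CS[OF u, of \<nu>] by simp
    finally show "(- (- F 2 \<nu> u) * F 0 \<nu> u - (- F 1 \<nu> u) * (- F 1 \<nu> u)) / (F 0 \<nu> u * F 0 \<nu> u) > 0"
      using F0 by simp
  qed
  thus ?thesis
    by (rule monotone_on_transfer) (simp add: deriv_besselK besselK_F)
qed

lemma part_c:
  shows "strict_antimono_on {0<..} (\<lambda>u. u * deriv (besselK \<nu>) u / besselK \<nu> u)"
proof -
  have "strict_antimono_on {0<..} (\<lambda>u. - qf \<nu> u)"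
  proof (rule santimono_deriv)
    fix u :: real assume u: "u > 0"
    show "((\<lambda>u. - qf \<nu> u) has_real_derivative - (((qf \<nu> u)^2 - u^2 - \<nu>^2) / u)) (at u)"
      by (rule DERIV_minus[OF qf_deriv[OF u]])
    have "((qf \<nu> u)^2 - u^2 - \<nu>^2) / u > 0" using qf_lower[OF u, of \<nu>] u by simp
    thus "- (((qf \<nu> u)^2 - u^2 - \<nu>^2) / u) < 0" by simp
  qed
  thus ?thesis
    by (rule monotone_on_transfer) (simp add: deriv_besselK besselK_F qf_def)
qed

lemma part_d:
  shows "strict_mono_on {0<..} (\<lambda>u. u * deriv (besselK \<nu>) u)"
proof -
  have "strict_mono_on {0<..} (\<lambda>u. u * - F 1 \<nu> u)"
  proof (rule smono_deriv)
    fix u :: real assume u: "u > 0"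
    have F0: "F 0 \<nu> u > 0" by (rule F_pos[OF u])
    show "((\<lambda>u. u * - F 1 \<nu> u) has_real_derivative 1 * (- F 1 \<nu> u) + (- (- F 2 \<nu> u)) * u) (at u)"
      by (rule DERIV_mult[OF DERIV_ident DERIV_minus[OF d1[OF u]]])
    have "1 * (- F 1 \<nu> u) + (- (- F 2 \<nu> u)) * u = (u^2 + \<nu>^2) * F 0 \<nu> u / u"
      unfolding F2_eq[OF u] using u by (simp add: field_simps power2_eq_square)
    also have "\<dots> > 0" using F0 u by (simp add: add_pos_nonneg)
    finally show "1 * (- F 1 \<nu> u) + (- (- F 2 \<nu> u)) * u > 0" .
  qed
  thus ?thesis
    by (rule monotone_on_transfer) (simp add: deriv_besselK)
qed

lemma part_ef:
  assumes a: "a \<ge> 0" and up: "\<And>u. u > a \<Longrightarrow> qf \<nu> u < u^2 + \<nu>^2"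
  shows "strict_mono_on {a<..} (\<lambda>u. u^2 * deriv (besselK \<nu>) u)"
proof -
  have "strict_mono_on {a<..} (\<lambda>u. u^2 * - F 1 \<nu> u)"
  proof (rule smono_deriv)
    fix u :: real assume ua: "u > a"
    have u: "u > 0" using ua a by linarith
    have F0: "F 0 \<nu> u > 0" by (rule F_pos[OF u])
    have dsq: "((\<lambda>x. x^2) has_real_derivative 2 * u) (at u)"
      by (auto intro!: derivative_eq_intros)
    show "((\<lambda>u. u^2 * - F 1 \<nu> u) has_real_derivative 2 * u * (- F 1 \<nu> u) + (- (- F 2 \<nu> u)) * u^2) (at u)"
      by (rule DERIV_mult[OF dsq DERIV_minus[OF d1[OF u]]])
    have "2 * u * (- F 1 \<nu> u) + (- (- F 2 \<nu> u)) * u^2 = F 0 \<nu> u * (u^2 + \<nu>^2 - qf \<nu> u)"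
      unfolding F2_eq[OF u] F1_eq[OF u] using u by (simp add: field_simps power2_eq_square)
    also have "\<dots> > 0" using F0 up[OF ua] by simp
    finally show "2 * u * (- F 1 \<nu> u) + (- (- F 2 \<nu> u)) * u^2 > 0" .
  qed
  thus ?thesis
    by (rule monotone_on_transfer) (use a in \<open>simp add: deriv_besselK\<close>)
qed

lemma midpoint_convex:
  fixes \<phi> \<phi>' :: "real \<Rightarrow> real"
  assumes dr: "\<And>x. x \<in> I \<Longrightarrow> (\<phi> has_real_derivative \<phi>' x) (at x)"
    and mn: "strict_mono_on I \<phi>'"
    and iv: "\<And>x y z. x \<in> I \<Longrightarrow> y \<in> I \<Longrightarrow> x \<le> z \<Longrightarrow> z \<le> y \<Longrightarrow> z \<in> I"
    and ab: "a \<in> I" "b \<in> I" "a < b"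
  shows "2 * \<phi> ((a+b)/2) < \<phi> a + \<phi> b"
proof -
  define m where "m = (a+b)/2"
  have am: "a < m" "m < b" using ab unfolding m_def by auto
  have mI: "m \<in> I" using iv[OF ab(1,2)] am by auto
  obtain z1 where z1: "a < z1" "z1 < m" "\<phi> m - \<phi> a = (m - a) * \<phi>' z1"
    using MVT2[OF am(1), of \<phi> \<phi>' ] dr iv[OF ab(1) mI] by force
  obtain z2 where z2: "m < z2" "z2 < b" "\<phi> b - \<phi> m = (b - m) * \<phi>' z2"
    using MVT2[OF am(2), of \<phi> \<phi>' ] dr iv[OF mI ab(2)] by force
  have z1I: "z1 \<in> I" using iv[OF ab(1) mI] z1 by auto
  have z2I: "z2 \<in> I" using iv[OF mI ab(2)] z2 by auto
  have lt: "\<phi>' z1 < \<phi>' z2" using mn z1I z2I z1 z2 unfolding monotone_on_def by auto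
  have "m + m = a + b" unfolding m_def by simp
  hence eq: "m - a = b - m" by linarith
  have pos: "b - m > 0" using am by linarith
  have "(b - m) * \<phi>' z1 < (b - m) * \<phi>' z2" by (rule mult_strict_left_mono[OF lt pos])
  hence "(m - a) * \<phi>' z1 < (b - m) * \<phi>' z2" unfolding eq .
  hence "\<phi> m - \<phi> a < \<phi> b - \<phi> m" using z1 z2 by simp
  thus ?thesis unfolding m_def by simp
qed

lemma midpoint_convex':
  fixes \<phi> \<phi>' :: "real \<Rightarrow> real"
  assumes dr: "\<And>x. x \<in> I \<Longrightarrow> (\<phi> has_real_derivative \<phi>' x) (at x)"
    and mn: "strict_mono_on I \<phi>'"
    and iv: "\<And>x y z. x \<in> I \<Longrightarrow> y \<in> I \<Longrightarrow> x \<le> z \<Longrightarrow> z \<le> y \<Longrightarrow> z \<in> I"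
    and ab: "a \<in> I" "b \<in> I" "a \<noteq> b"
  shows "2 * \<phi> ((a+b)/2) < \<phi> a + \<phi> b"
proof (cases "a < b")
  case True show ?thesis
    by (rule midpoint_convex[where I=I and \<phi>=\<phi> and \<phi>'=\<phi>', OF dr mn iv ab(1) ab(2) True])
next
  case False hence "b < a" using ab by simp
  have "2 * \<phi> ((b+a)/2) < \<phi> b + \<phi> a"
    by (rule midpoint_convex[where I=I and \<phi>=\<phi> and \<phi>'=\<phi>', OF dr mn iv ab(2) ab(1) \<open>b < a\<close>])
  thus ?thesis by (simp add: add.commute)
qed

lemma dK: "u > 0 \<Longrightarrow> (besselK \<nu> has_real_derivative deriv (besselK \<nu>) u) (at u)"
proof -
  assume u: "u > 0"
  have e: "besselK \<nu> = F 0 \<nu>" by (rule ext) (rule besselK_F)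
  show ?thesis unfolding deriv_besselK[OF u] unfolding e by (rule d0[OF u])
qed

lemma antimono_neg: "strict_antimono_on S (g::real\<Rightarrow>real) \<Longrightarrow> strict_mono_on S (\<lambda>x. - g x)"
  unfolding monotone_on_def by auto

lemma intv_Ioi: "\<And>x y z. x \<in> {0::real<..} \<Longrightarrow> y \<in> {0<..} \<Longrightarrow> x \<le> z \<Longrightarrow> z \<le> y \<Longrightarrow> z \<in> {0<..}"
  by auto

lemma hm_lemma:
  fixes A B M :: real
  assumes h: "2 * (1 / M) < 1 / A + 1 / B" and p: "A > 0" "B > 0" "M > 0"
  shows "2 * A * B / (A + B) < M"
proof -
  have "2 * (1 / M) * (A * B * M) < (1 / A + 1 / B) * (A * B * M)"
    by (rule mult_strict_right_mono[OF h]) (use p in simp)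
  moreover have "2 * (1 / M) * (A * B * M) = 2 * A * B" using p by simp
  moreover have "(1 / A + 1 / B) * (A * B * M) = M * (A + B)" using p by (simp add: field_simps)
  ultimately have lt: "2 * A * B < M * (A + B)" by linarith
  have "A + B > 0" using p by simp
  thus ?thesis using lt by (subst pos_divide_less_eq) auto
qed



lemma ineq1:
  assumes nu: "\<bar>\<nu>\<bar> \<ge> 1" and u: "u1 > 0" "u2 > 0" "u1 \<noteq> u2"
  shows "2 * besselK \<nu> u1 * besselK \<nu> u2 / (besselK \<nu> u1 + besselK \<nu> u2) < besselK \<nu> ((u1 + u2) / 2)"
proof -
  let ?K = "besselK \<nu>"
  have "2 * (1 / ?K ((u1+u2)/2)) < 1 / ?K u1 + 1 / ?K u2"
  proof (rule midpoint_convex'[where I="{0<..}" and \<phi>'="\<lambda>u. - (deriv ?K u / (?K u)^2)" and \<phi>="\<lambda>u. 1 / ?K u" and a=u1 and b=u2])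
    fix x :: real assume "x \<in> {0<..}"
    hence x: "x > 0" by simp
    have "((\<lambda>u. 1 / ?K u) has_real_derivative (0 * ?K x - 1 * deriv ?K x) / (?K x * ?K x)) (at x)"
      by (rule DERIV_divide[OF DERIV_const dK[OF x]]) (use besselK_pos[OF x, where \<nu>=\<nu>] in simp)
    thus "((\<lambda>u. 1 / ?K u) has_real_derivative - (deriv ?K x / (?K x)^2)) (at x)"
      by (simp add: power2_eq_square)
  next
    show "strict_mono_on {0<..} (\<lambda>u. - (deriv ?K u / (?K u)^2))"
      by (rule antimono_neg[OF part_a[OF nu]])
  qed (use u in simp_all)
  moreover have K: "?K u1 > 0" "?K u2 > 0" "?K ((u1+u2)/2) > 0" using besselK_pos[where \<nu>=\<nu>] u by auto
  ultimately show ?thesis by (rule hm_lemma)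
qed

lemma ineq2:
  assumes u: "u1 > 0" "u2 > 0" "u1 \<noteq> u2"
  shows "besselK \<nu> ((u1 + u2) / 2) < sqrt (besselK \<nu> u1 * besselK \<nu> u2)"
proof -
  let ?K = "besselK \<nu>"
  have "2 * ln (?K ((u1+u2)/2)) < ln (?K u1) + ln (?K u2)"
  proof (rule midpoint_convex'[where I="{0<..}" and \<phi>'="\<lambda>u. deriv ?K u / ?K u" and \<phi>="\<lambda>u. ln (?K u)" and a=u1 and b=u2])
    fix x :: real assume "x \<in> {0<..}"
    hence x: "x > 0" by simp
    have "((\<lambda>u. ln (?K u)) has_real_derivative 1 / ?K x * deriv ?K x) (at x)"
      by (rule DERIV_chain2[OF DERIV_ln_divide[OF besselK_pos[OF x]] dK[OF x]])
    thus "((\<lambda>u. ln (?K u)) has_real_derivative deriv ?K x / ?K x) (at x)" by simp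
  next
    show "strict_mono_on {0<..} (\<lambda>u. deriv ?K u / ?K u)" by (rule part_b)
  qed (use u in simp_all)
  moreover have K: "?K u1 > 0" "?K u2 > 0" "?K ((u1+u2)/2) > 0" using besselK_pos[where \<nu>=\<nu>] u by auto
  ultimately have "ln ((?K ((u1+u2)/2))^2) < ln (?K u1 * ?K u2)"
    by (simp add: ln_mult power2_eq_square)
  hence "(?K ((u1+u2)/2))^2 < ?K u1 * ?K u2" using K by (simp add: ln_less_cancel_iff)
  thus ?thesis by (rule real_less_rsqrt)
qed

lemma sqrt_exp_ln: assumes "u1 > 0" "u2 > (0::real)" shows "exp ((ln u1 + ln u2) / 2) = sqrt (u1 * u2)"
proof -
  define e where "e = exp ((ln u1 + ln u2) / 2)"
  have "e^2 = exp ((ln u1 + ln u2) / 2 + (ln u1 + ln u2) / 2)" unfolding e_def power2_eq_square by (rule exp_add[symmetric])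
  also have "\<dots> = u1 * u2" using assms by (simp add: exp_add)
  finally have "sqrt (u1 * u2) = sqrt (e^2)" by simp
  also have "\<dots> = e" unfolding e_def by simp
  finally show ?thesis unfolding e_def by simp
qed

lemma ineq3:
  assumes u: "u1 > 0" "u2 > 0" "u1 \<noteq> u2"
  shows "sqrt (besselK \<nu> u1 * besselK \<nu> u2) < besselK \<nu> (sqrt (u1 * u2))"
proof -
  let ?K = "besselK \<nu>"
  have ab: "ln u1 \<noteq> ln u2" using u by simp
  have "2 * (- ln (?K (exp ((ln u1 + ln u2)/2)))) < (- ln (?K (exp (ln u1)))) + (- ln (?K (exp (ln u2))))"
  proof (rule midpoint_convex'[where I="UNIV" and \<phi>'="\<lambda>s. - (exp s * deriv ?K (exp s) / ?K (exp s))"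
        and \<phi>="\<lambda>s. - ln (?K (exp s))" and a="ln u1" and b="ln u2"])
    fix s :: real
    have e: "exp s > 0" by simp
    have d: "((\<lambda>s. ?K (exp s)) has_real_derivative deriv ?K (exp s) * exp s) (at s)"
      by (rule DERIV_chain2[OF dK[OF e] DERIV_exp])
    have "((\<lambda>s. - ln (?K (exp s))) has_real_derivative - (1 / ?K (exp s) * (deriv ?K (exp s) * exp s))) (at s)"
      by (rule DERIV_minus[OF DERIV_chain2[OF DERIV_ln_divide[OF besselK_pos[OF e]] d]])
    thus "((\<lambda>s. - ln (?K (exp s))) has_real_derivative - (exp s * deriv ?K (exp s) / ?K (exp s))) (at s)"
      by (simp add: mult.commute)
  next
    show "strict_mono_on UNIV (\<lambda>s. - (exp s * deriv ?K (exp s) / ?K (exp s)))"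
    proof (rule monotone_onI)
      fix r s :: real assume "r < s"
      hence "exp r < exp s" by simp
      moreover have "exp r \<in> {0<..}" "exp s \<in> {0<..}" by auto
      ultimately have "exp s * deriv ?K (exp s) / ?K (exp s) < exp r * deriv ?K (exp r) / ?K (exp r)"
        using part_c[of \<nu>] unfolding monotone_on_def by blast
      thus "- (exp r * deriv ?K (exp r) / ?K (exp r)) < - (exp s * deriv ?K (exp s) / ?K (exp s))" by simp
    qed
  qed (use ab in simp_all)
  moreover have "exp ((ln u1 + ln u2)/2) = sqrt (u1 * u2)" by (rule sqrt_exp_ln[OF u(1,2)])
  ultimately have l: "ln (?K u1) + ln (?K u2) < 2 * ln (?K (sqrt (u1 * u2)))" using u by simp
  have K: "?K u1 > 0" "?K u2 > 0" "?K (sqrt (u1 * u2)) > 0" using besselK_pos[where \<nu>=\<nu>] u by auto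
  have "ln (?K u1 * ?K u2) < ln ((?K (sqrt (u1 * u2)))^2)"
    using l K by (simp add: ln_mult power2_eq_square)
  hence "?K u1 * ?K u2 < (?K (sqrt (u1 * u2)))^2" using K by (simp add: ln_less_cancel_iff)
  thus ?thesis using K by (intro real_less_lsqrt) auto
qed

lemma ineq4:
  assumes u: "u1 > 0" "u2 > 0" "u1 \<noteq> u2"
  shows "besselK \<nu> (sqrt (u1 * u2)) < (besselK \<nu> u1 + besselK \<nu> u2) / 2"
proof -
  let ?K = "besselK \<nu>"
  have ab: "ln u1 \<noteq> ln u2" using u by simp
  have "2 * ?K (exp ((ln u1 + ln u2)/2)) < ?K (exp (ln u1)) + ?K (exp (ln u2))"
  proof (rule midpoint_convex'[where I="UNIV" and \<phi>'="\<lambda>s. exp s * deriv ?K (exp s)"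
        and \<phi>="\<lambda>s. ?K (exp s)" and a="ln u1" and b="ln u2"])
    fix s :: real
    have e: "exp s > 0" by simp
    have d: "((\<lambda>s. ?K (exp s)) has_real_derivative deriv ?K (exp s) * exp s) (at s)"
      by (rule DERIV_chain2[OF dK[OF e] DERIV_exp])
    thus "((\<lambda>s. ?K (exp s)) has_real_derivative exp s * deriv ?K (exp s)) (at s)"
      by (simp add: mult.commute)
  next
    show "strict_mono_on UNIV (\<lambda>s. exp s * deriv ?K (exp s))"
    proof (rule monotone_onI)
      fix r s :: real assume "r < s"
      hence "exp r < exp s" by simp
      moreover have "exp r \<in> {0<..}" "exp s \<in> {0<..}" by auto
      ultimately show "exp r * deriv ?K (exp r) < exp s * deriv ?K (exp s)"
        using part_d[of \<nu>] unfolding monotone_on_def by blast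
    qed
  qed (use ab in simp_all)
  moreover have "exp ((ln u1 + ln u2)/2) = sqrt (u1 * u2)" by (rule sqrt_exp_ln[OF u(1,2)])
  ultimately show ?thesis using u by simp
qed

lemma ineq5:
  assumes a0: "a0 \<ge> 0" and mono: "strict_mono_on {a0<..} (\<lambda>u. u^2 * deriv (besselK \<nu>) u)"
    and u: "u1 > a0" "u2 > a0" "u1 \<noteq> u2"
  shows "besselK \<nu> (2 * u1 * u2 / (u1 + u2)) < (besselK \<nu> u1 + besselK \<nu> u2) / 2"
proof -
  let ?K = "besselK \<nu>"
  have u0: "u1 > 0" "u2 > 0" using u a0 by auto
  define I where "I = {x::real. x > 0 \<and> 1 / x > a0}"
  have "2 * ?K (1 / ((1/u1 + 1/u2)/2)) < ?K (1 / (1/u1)) + ?K (1 / (1/u2))"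
  proof (rule midpoint_convex'[where I=I and \<phi>'="\<lambda>x. - ((1/x)^2 * deriv ?K (1/x))"
        and \<phi>="\<lambda>x. ?K (1/x)" and a="1/u1" and b="1/u2"])
    fix x :: real assume "x \<in> I"
    hence x: "x > 0" unfolding I_def by simp
    have ix: "1/x > 0" using x by simp
    have di: "((\<lambda>x. 1 / x) has_real_derivative (0 * x - 1 * 1) / (x * x)) (at x)"
      by (rule DERIV_divide[OF DERIV_const DERIV_ident]) (use x in simp)
    have "((\<lambda>x. ?K (1/x)) has_real_derivative deriv ?K (1/x) * ((0 * x - 1 * 1) / (x * x))) (at x)"
      by (rule DERIV_chain2[OF dK[OF ix] di])
    thus "((\<lambda>x. ?K (1/x)) has_real_derivative - ((1/x)^2 * deriv ?K (1/x))) (at x)"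
      by (simp add: power2_eq_square field_simps)
  next
    show "strict_mono_on I (\<lambda>x. - ((1/x)^2 * deriv ?K (1/x)))"
    proof (rule monotone_onI)
      fix r s :: real assume rs: "r \<in> I" "s \<in> I" "r < s"
      have r0: "r > 0" using rs unfolding I_def by simp
      have "1/s < 1/r" using rs r0 by (simp add: frac_less2)
      moreover have "1/s \<in> {a0<..}" "1/r \<in> {a0<..}" using rs unfolding I_def by auto
      ultimately have "(1/s)^2 * deriv ?K (1/s) < (1/r)^2 * deriv ?K (1/r)"
        using mono unfolding monotone_on_def by blast
      thus "- ((1/r)^2 * deriv ?K (1/r)) < - ((1/s)^2 * deriv ?K (1/s))" by simp
    qed
  next
    fix x y z :: real assume xyz: "x \<in> I" "y \<in> I" "x \<le> z" "z \<le> y"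
    have z0: "z > 0" using xyz unfolding I_def by auto
    have "1/y \<le> 1/z" using xyz z0 by (simp add: frac_le)
    thus "z \<in> I" using xyz z0 unfolding I_def by auto
  qed (use u u0 in \<open>auto simp: I_def\<close>)
  moreover have "1 / ((1/u1 + 1/u2)/2) = 2 * u1 * u2 / (u1 + u2)" using u0 by (simp add: field_simps)
  ultimately show ?thesis by simp
qed

lemma strict_or_eq:
  fixes A B :: real
  assumes "x \<noteq> y \<Longrightarrow> A < B" "x = y \<Longrightarrow> A = B"
  shows "A \<le> B \<and> (A = B \<longleftrightarrow> x = y)"
  using assms by (cases "x = y") auto

theorem theorem2:
  shows
   "(\<forall>\<nu>::real. \<bar>\<nu>\<bar> \<ge> 1 \<longrightarrow>
        strict_antimono_on {0<..} (\<lambda>u. deriv (besselK \<nu>) u / (besselK \<nu> u)^2))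
  \<and> (\<forall>\<nu>::real. strict_mono_on {0<..} (\<lambda>u. deriv (besselK \<nu>) u / besselK \<nu> u))
  \<and> (\<forall>\<nu>::real. strict_antimono_on {0<..} (\<lambda>u. u * deriv (besselK \<nu>) u / besselK \<nu> u))
  \<and> (\<forall>\<nu>::real. strict_mono_on {0<..} (\<lambda>u. u * deriv (besselK \<nu>) u))
  \<and> (\<forall>\<nu>::real. \<bar>\<nu>\<bar> \<ge> 5/4 \<longrightarrow>
        strict_mono_on {0<..} (\<lambda>u. u^2 * deriv (besselK \<nu>) u))
  \<and> (\<forall>\<nu>::real. strict_mono_on {2<..} (\<lambda>u. u^2 * deriv (besselK \<nu>) u))
  \<and> (\<forall>\<nu> u1 u2::real. \<bar>\<nu>\<bar> \<ge> 1 \<longrightarrow> u1 > 0 \<longrightarrow> u2 > 0 \<longrightarrow>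
        2 * besselK \<nu> u1 * besselK \<nu> u2 / (besselK \<nu> u1 + besselK \<nu> u2)
          \<le> besselK \<nu> ((u1 + u2) / 2)
      \<and> (2 * besselK \<nu> u1 * besselK \<nu> u2 / (besselK \<nu> u1 + besselK \<nu> u2)
          = besselK \<nu> ((u1 + u2) / 2) \<longleftrightarrow> u1 = u2))
  \<and> (\<forall>\<nu> u1 u2::real. u1 > 0 \<longrightarrow> u2 > 0 \<longrightarrow>
        besselK \<nu> ((u1 + u2) / 2) \<le> sqrt (besselK \<nu> u1 * besselK \<nu> u2)
      \<and> (besselK \<nu> ((u1 + u2) / 2) = sqrt (besselK \<nu> u1 * besselK \<nu> u2) \<longleftrightarrow> u1 = u2)
      \<and> sqrt (besselK \<nu> u1 * besselK \<nu> u2) \<le> besselK \<nu> (sqrt (u1 * u2))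
      \<and> (sqrt (besselK \<nu> u1 * besselK \<nu> u2) = besselK \<nu> (sqrt (u1 * u2)) \<longleftrightarrow> u1 = u2)
      \<and> besselK \<nu> (sqrt (u1 * u2)) \<le> (besselK \<nu> u1 + besselK \<nu> u2) / 2
      \<and> (besselK \<nu> (sqrt (u1 * u2)) = (besselK \<nu> u1 + besselK \<nu> u2) / 2 \<longleftrightarrow> u1 = u2))
  \<and> (\<forall>\<nu> u1 u2::real. (\<bar>\<nu>\<bar> \<ge> 5/4 \<and> u1 > 0 \<and> u2 > 0) \<or> (u1 > 2 \<and> u2 > 2) \<longrightarrow>
        besselK \<nu> (2 * u1 * u2 / (u1 + u2)) \<le> (besselK \<nu> u1 + besselK \<nu> u2) / 2
      \<and> (besselK \<nu> (2 * u1 * u2 / (u1 + u2)) = (besselK \<nu> u1 + besselK \<nu> u2) / 2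
           \<longleftrightarrow> u1 = u2))"
proof -
  have P5: "strict_mono_on {0<..} (\<lambda>u. u^2 * deriv (besselK \<nu>) u)" if "\<bar>\<nu>\<bar> \<ge> 5/4" for \<nu> :: real
    by (rule part_ef[of 0]) (use qf_upper that in auto)
  have P6: "strict_mono_on {2<..} (\<lambda>u. u^2 * deriv (besselK \<nu>) u)" for \<nu> :: real
    by (rule part_ef[of 2]) (use qf_upper in auto)
  have P7: "2 * besselK \<nu> u1 * besselK \<nu> u2 / (besselK \<nu> u1 + besselK \<nu> u2)
          \<le> besselK \<nu> ((u1 + u2) / 2)
      \<and> (2 * besselK \<nu> u1 * besselK \<nu> u2 / (besselK \<nu> u1 + besselK \<nu> u2)
          = besselK \<nu> ((u1 + u2) / 2) \<longleftrightarrow> u1 = u2)"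
    if "\<bar>\<nu>\<bar> \<ge> 1" "u1 > 0" "u2 > 0" for \<nu> u1 u2 :: real
  proof (rule strict_or_eq)
    show "u1 \<noteq> u2 \<Longrightarrow> 2 * besselK \<nu> u1 * besselK \<nu> u2 / (besselK \<nu> u1 + besselK \<nu> u2) < besselK \<nu> ((u1 + u2) / 2)"
      using ineq1 that by blast
    show "u1 = u2 \<Longrightarrow> 2 * besselK \<nu> u1 * besselK \<nu> u2 / (besselK \<nu> u1 + besselK \<nu> u2) = besselK \<nu> ((u1 + u2) / 2)"
      using besselK_pos[OF that(2), of \<nu>] by simp
  qed
  have P8: "besselK \<nu> ((u1 + u2) / 2) \<le> sqrt (besselK \<nu> u1 * besselK \<nu> u2)
      \<and> (besselK \<nu> ((u1 + u2) / 2) = sqrt (besselK \<nu> u1 * besselK \<nu> u2) \<longleftrightarrow> u1 = u2)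
      \<and> sqrt (besselK \<nu> u1 * besselK \<nu> u2) \<le> besselK \<nu> (sqrt (u1 * u2))
      \<and> (sqrt (besselK \<nu> u1 * besselK \<nu> u2) = besselK \<nu> (sqrt (u1 * u2)) \<longleftrightarrow> u1 = u2)
      \<and> besselK \<nu> (sqrt (u1 * u2)) \<le> (besselK \<nu> u1 + besselK \<nu> u2) / 2
      \<and> (besselK \<nu> (sqrt (u1 * u2)) = (besselK \<nu> u1 + besselK \<nu> u2) / 2 \<longleftrightarrow> u1 = u2)"
    if u: "u1 > 0" "u2 > 0" for \<nu> u1 u2 :: real
  proof -
    have K: "besselK \<nu> u1 > 0" using besselK_pos u by blast
    have a: "besselK \<nu> ((u1 + u2) / 2) \<le> sqrt (besselK \<nu> u1 * besselK \<nu> u2)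
      \<and> (besselK \<nu> ((u1 + u2) / 2) = sqrt (besselK \<nu> u1 * besselK \<nu> u2) \<longleftrightarrow> u1 = u2)"
    proof (rule strict_or_eq)
      show "u1 \<noteq> u2 \<Longrightarrow> besselK \<nu> ((u1 + u2) / 2) < sqrt (besselK \<nu> u1 * besselK \<nu> u2)"
        using ineq2 u by blast
      show "u1 = u2 \<Longrightarrow> besselK \<nu> ((u1 + u2) / 2) = sqrt (besselK \<nu> u1 * besselK \<nu> u2)"
        using K by simp
    qed
    have b: "sqrt (besselK \<nu> u1 * besselK \<nu> u2) \<le> besselK \<nu> (sqrt (u1 * u2))
      \<and> (sqrt (besselK \<nu> u1 * besselK \<nu> u2) = besselK \<nu> (sqrt (u1 * u2)) \<longleftrightarrow> u1 = u2)"
    proof (rule strict_or_eq)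
      show "u1 \<noteq> u2 \<Longrightarrow> sqrt (besselK \<nu> u1 * besselK \<nu> u2) < besselK \<nu> (sqrt (u1 * u2))"
        using ineq3 u by blast
      show "u1 = u2 \<Longrightarrow> sqrt (besselK \<nu> u1 * besselK \<nu> u2) = besselK \<nu> (sqrt (u1 * u2))"
        using K u by simp
    qed
    have c: "besselK \<nu> (sqrt (u1 * u2)) \<le> (besselK \<nu> u1 + besselK \<nu> u2) / 2
      \<and> (besselK \<nu> (sqrt (u1 * u2)) = (besselK \<nu> u1 + besselK \<nu> u2) / 2 \<longleftrightarrow> u1 = u2)"
    proof (rule strict_or_eq)
      show "u1 \<noteq> u2 \<Longrightarrow> besselK \<nu> (sqrt (u1 * u2)) < (besselK \<nu> u1 + besselK \<nu> u2) / 2"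
        using ineq4 u by blast
      show "u1 = u2 \<Longrightarrow> besselK \<nu> (sqrt (u1 * u2)) = (besselK \<nu> u1 + besselK \<nu> u2) / 2"
        using u by simp
    qed
    show ?thesis using a b c by blast
  qed
  have P9: "besselK \<nu> (2 * u1 * u2 / (u1 + u2)) \<le> (besselK \<nu> u1 + besselK \<nu> u2) / 2
      \<and> (besselK \<nu> (2 * u1 * u2 / (u1 + u2)) = (besselK \<nu> u1 + besselK \<nu> u2) / 2
           \<longleftrightarrow> u1 = u2)"
    if h: "(\<bar>\<nu>\<bar> \<ge> 5/4 \<and> u1 > 0 \<and> u2 > 0) \<or> (u1 > 2 \<and> u2 > 2)" for \<nu> u1 u2 :: real
  proof (rule strict_or_eq)
    assume ne: "u1 \<noteq> u2"
    show "besselK \<nu> (2 * u1 * u2 / (u1 + u2)) < (besselK \<nu> u1 + besselK \<nu> u2) / 2"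
    proof (cases "\<bar>\<nu>\<bar> \<ge> 5/4 \<and> u1 > 0 \<and> u2 > 0")
      case True thus ?thesis using ineq5[of 0 \<nu> u1 u2] P5 ne by auto
    next
      case False thus ?thesis using ineq5[of 2 \<nu> u1 u2] P6 ne h by auto
    qed
  next
    assume "u1 = u2"
    moreover have "u1 > 0" using h by auto
    ultimately show "besselK \<nu> (2 * u1 * u2 / (u1 + u2)) = (besselK \<nu> u1 + besselK \<nu> u2) / 2"
      by (simp add: field_simps)
  qed
  show ?thesis
    using part_a part_b part_c part_d P5 P6 P7 P8 P9 by blast
qed

end
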